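(* Let $N\ge 1$ and $1\le K\le N$ be integers and $\lambda_s,\lambda_d,c>0$. Let $T_1,\dots,T_N$ be i.i.d. with CDF $1-e^{-\lambda_s(t-c)}$ for $t>c$, let $T_{\mathrm D}$ be independent of them with density $\lambda_d e^{-\lambda_d(t-c)}$ for $t>c$, let $T_N(K)$ be the $K$-th smallest of $T_1,\dots,T_N$, and fix $n\in\{1,\dots,N\}$. Define $$\mathcal C_{\mathrm S,1}=\{T_N(K)<T_{\mathrm D}\}\cap\{T_n\le \min\{T_{\mathrm D},T_N(K)\}\},\qquad \mathcal C_{\mathrm F,1}=\{T_N(K)<T_{\mathrm D}\}\cap\{T_n> \min\{T_{\mathrm D},T_N(K)\}\},$$ both assumed to have positive probability. Then $\mathbb E[T_N(K)\mid\mathcal C_{\mathrm S,1}]=\mathbb E[T_N(K)\mid\mathcal C_{\mathrm F,1}]$ and $\mathbb E[T_N(K)^2\mid\mathcal C_{\mathrm S,1}]=\mathbb E[T_N(K)^2\mid\mathcal C_{\mathrm F,1}]$.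
   Context: Model: an access point multicasts a status update with a random (shifted exponential) deadline $T_{\mathrm D}$ to $N$ devices with i.i.d. shifted-exponential delivery times; transmission terminates at $\min\{T_{\mathrm D},T_N(K)\}$. $\mathcal C_{\mathrm S,1}$ (resp. $\mathcal C_{\mathrm F,1}$): device $n$ receives (resp. fails to receive) the update and the transmission stops because $K$ devices received it before the deadline. *)

theory Defs
  imports "HOL-Probability.Probability"
begin

definition kth_smallest :: "nat \<Rightarrow> real list \<Rightarrow> real" where
  "kth_smallest K xs = sort xs ! (K - 1)"

definition cond_exp_event :: "'a measure \<Rightarrow> ('a \<Rightarrow> real) \<Rightarrow> 'a set \<Rightarrow> real" where
  "cond_exp_event M X A = (\<integral>\<omega>. indicator A \<omega> * X \<omega> \<partial>M) / measure M A"

end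

theory Submission
  imports Defs
begin

lemma card_le_sorted:
  fixes s :: "real list"
  assumes "sorted s" "k < length s"
  shows "s ! k \<le> t \<longleftrightarrow> k < card {j. j < length s \<and> s ! j \<le> t}"
proof
  assume h: "s ! k \<le> t"
  have "{0..k} \<subseteq> {j. j < length s \<and> s ! j \<le> t}"
    using assms h sorted_nth_mono by fastforce
  from card_mono[OF _ this] show "k < card {j. j < length s \<and> s ! j \<le> t}" by simp
next
  assume h: "k < card {j. j < length s \<and> s ! j \<le> t}"
  show "s ! k \<le> t"
  proof (rule ccontr)
    assume "\<not> s ! k \<le> t"
    then have "{j. j < length s \<and> s ! j \<le> t} \<subseteq> {0..<k}"
      using assms sorted_nth_mono by (smt (verit, best) atLeastLessThan_iff mem_Collect_eq not_le subsetI zero_le)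
    from card_mono[OF _ this] h show False by simp
  qed
qed

lemma card_filter_map_upt:
  "length (filter P (map Y [1..<N+1])) = card {i\<in>{1..N}. P (Y i)}"
proof -
  have "length (filter P (map Y [1..<N+1])) = length (filter (P \<circ> Y) [1..<N+1])"
    by (simp add: filter_map)
  also have "\<dots> = card (set (filter (P \<circ> Y) [1..<N+1]))"
    by (metis distinct_card distinct_filter distinct_upt)
  also have "set (filter (P \<circ> Y) [1..<N+1]) = {i\<in>{1..N}. P (Y i)}" by auto
  finally show ?thesis .
qed

lemma length_filter_sort: "length (filter P (sort xs)) = length (filter P xs)"
  by (metis mset_filter mset_sort size_mset)

lemma kth_le_iff:
  assumes "1 \<le> K" "K \<le> N"
  shows "kth_smallest K (map Y [1..<N+1]) \<le> t \<longleftrightarrow> K \<le> card {i\<in>{1..N}. Y i \<le> t}"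
proof -
  let ?s = "sort (map Y [1..<N+1])"
  have "kth_smallest K (map Y [1..<N+1]) = ?s ! (K - 1)" by (simp add: kth_smallest_def)
  moreover have "?s ! (K-1) \<le> t \<longleftrightarrow> K - 1 < card {j. j < length ?s \<and> ?s ! j \<le> t}"
    by (rule card_le_sorted) (use assms in auto)
  moreover have "card {j. j < length ?s \<and> ?s ! j \<le> t} = card {i\<in>{1..N}. Y i \<le> t}"
    using length_filter_conv_card[of "\<lambda>x. x \<le> t" ?s] length_filter_sort[of "\<lambda>x. x \<le> t"]
      card_filter_map_upt[of "\<lambda>x. x \<le> t" Y N] by simp
  ultimately show ?thesis using assms by auto
qed

lemma kth_count:
  assumes "1 \<le> K" "K \<le> N" "inj_on Y {1..N}"
  shows "card {i\<in>{1..N}. Y i \<le> kth_smallest K (map Y [1..<N+1])} = K"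
proof -
  let ?s = "sort (map Y [1..<N+1])"
  have "set [1..<N+1] = {1..N}" by auto
  then have ds: "distinct ?s" using assms(3) by (simp only: distinct_sort distinct_map distinct_upt)
  have ss: "sorted_wrt (<) ?s" using ds by (simp add: strict_sorted_iff)
  have len: "length ?s = N" by simp
  have k: "kth_smallest K (map Y [1..<N+1]) = ?s ! (K - 1)" by (simp add: kth_smallest_def)
  have "{j. j < length ?s \<and> ?s ! j \<le> ?s ! (K-1)} = {0..<K}"
  proof -
    { fix j assume "j < N" 
      have "?s ! j \<le> ?s ! (K-1) \<longleftrightarrow> j \<le> K - 1"
        using ss assms `j < N` len
        by (smt (verit, ccfv_SIG) diff_less less_le_trans nat_neq_iff not_le sorted_wrt_nth_less zero_less_one)
    }
    then show ?thesis using assms len by auto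
  qed
  then have "card {j. j < length ?s \<and> ?s ! j \<le> ?s ! (K-1)} = K" by simp
  moreover have "card {j. j < length ?s \<and> ?s ! j \<le> ?s ! (K-1)} = card {i\<in>{1..N}. Y i \<le> ?s ! (K-1)}"
    using length_filter_conv_card[of "\<lambda>x. x \<le> ?s ! (K-1)" ?s] length_filter_sort[of "\<lambda>x. x \<le> ?s ! (K-1)"]
      card_filter_map_upt[of "\<lambda>x. x \<le> ?s ! (K-1)" Y N] by simp
  ultimately show ?thesis using k by simp
qed

lemma kth_count_gt:
  assumes "1 \<le> K" "K \<le> N" "inj_on Y {1..N}"
  shows "card {i\<in>{1..N}. kth_smallest K (map Y [1..<N+1]) < Y i} = N - K"
proof -
  let ?t = "kth_smallest K (map Y [1..<N+1])"
  have "{i\<in>{1..N}. ?t < Y i} = {1..N} - {i\<in>{1..N}. Y i \<le> ?t}" by auto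
  moreover have "card ({1..N} - {i\<in>{1..N}. Y i \<le> ?t}) = card {1..N} - card {i\<in>{1..N}. Y i \<le> ?t}"
    by (rule card_Diff_subset) auto
  ultimately show ?thesis using kth_count[OF assms] by simp
qed

lemma kth_perm:
  assumes "mset xs = mset ys"
  shows "kth_smallest K xs = kth_smallest K ys"
  using assms unfolding kth_smallest_def
  using properties_for_sort[of "sort ys" xs] by simp

lemma RL:
  fixes F G :: "'a \<Rightarrow> real"
  assumes Fm: "F \<in> borel_measurable M" and Gm: "G \<in> borel_measurable M" and N: "N > 0"
    and p: "(\<integral>\<^sup>+x. ennreal (F x) \<partial>M) * of_nat N = of_nat k * (\<integral>\<^sup>+x. ennreal (G x) \<partial>M)"
    and q: "(\<integral>\<^sup>+x. ennreal (- F x) \<partial>M) * of_nat N = of_nat k * (\<integral>\<^sup>+x. ennreal (- G x) \<partial>M)"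
  shows "integral\<^sup>L M F * real N = real k * integral\<^sup>L M G"
proof -
  define A where "A = (\<integral>\<^sup>+x. ennreal (F x) \<partial>M)"
  define A' where "A' = (\<integral>\<^sup>+x. ennreal (- F x) \<partial>M)"
  define B where "B = (\<integral>\<^sup>+x. ennreal (G x) \<partial>M)"
  define B' where "B' = (\<integral>\<^sup>+x. ennreal (- G x) \<partial>M)"
  have p': "A * of_nat N = of_nat k * B" and q': "A' * of_nat N = of_nat k * B'"
    using p q unfolding A_def A'_def B_def B'_def by simp_all
  have topN: "Z * of_nat N = \<infinity> \<longleftrightarrow> Z = \<infinity>" for Z :: ennreal
    using N by (simp add: ennreal_mult_eq_top_iff)
  have topk: "of_nat k * Z = \<infinity> \<longleftrightarrow> (k \<noteq> 0 \<and> Z = \<infinity>)" for Z :: ennreal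
    by (auto simp: ennreal_mult_eq_top_iff)
  have e1: "enn2real A * real N = real k * enn2real B"
  proof -
    have "enn2real (A * of_nat N) = enn2real (of_nat k * B)" using p' by (rule arg_cong)
    then show ?thesis by (simp only: enn2real_mult enn2real_of_nat)
  qed
  have e2: "enn2real A' * real N = real k * enn2real B'"
  proof -
    have "enn2real (A' * of_nat N) = enn2real (of_nat k * B')" using q' by (rule arg_cong)
    then show ?thesis by (simp only: enn2real_mult enn2real_of_nat)
  qed
  have iF_iff: "integrable M F \<longleftrightarrow> A \<noteq> \<infinity> \<and> A' \<noteq> \<infinity>"
    using Fm unfolding real_integrable_def A_def A'_def by blast
  have iG_iff: "integrable M G \<longleftrightarrow> B \<noteq> \<infinity> \<and> B' \<noteq> \<infinity>"
    using Gm unfolding real_integrable_def B_def B'_def by blast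
  show ?thesis
  proof (cases "integrable M G")
    case True
    then have "B \<noteq> \<infinity>" "B' \<noteq> \<infinity>" using iG_iff by blast+
    then have "A \<noteq> \<infinity>" "A' \<noteq> \<infinity>" using p' q' topN topk by metis+
    then have iF: "integrable M F" using iF_iff by blast
    have "integral\<^sup>L M F * real N = (enn2real A - enn2real A') * real N"
      using real_lebesgue_integral_def[OF iF] unfolding A_def A'_def by simp
    also have "\<dots> = real k * (enn2real B - enn2real B')" using e1 e2 by (simp add: algebra_simps)
    also have "\<dots> = real k * integral\<^sup>L M G"
      using real_lebesgue_integral_def[OF True] unfolding B_def B'_def by simp
    finally show ?thesis .
  next
    case False
    show ?thesis
    proof (cases "k = 0")
      case True
      then have "A * of_nat N = 0" "A' * of_nat N = 0" using p' q' by simp_all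
      then have "A = 0" "A' = 0" using N by simp_all
      then have iF: "integrable M F" using iF_iff by simp
      have "integral\<^sup>L M F = enn2real A - enn2real A'"
        using real_lebesgue_integral_def[OF iF] unfolding A_def A'_def by simp
      then have "integral\<^sup>L M F = 0" using \<open>A = 0\<close> \<open>A' = 0\<close> by simp
      then show ?thesis using True by simp
    next
      case k: False
      have "B = \<infinity> \<or> B' = \<infinity>" using False iG_iff by blast
      then have "A = \<infinity> \<or> A' = \<infinity>" using p' q' topN topk k by metis
      then have "\<not> integrable M F" using iF_iff by blast
      then show ?thesis using False by (simp add: not_integrable_integral_eq)
    qed
  qed
qed
lemma kth_meas:
  assumes "1 \<le> K" "K \<le> N" and Ym: "\<And>i. i \<in> {1..N} \<Longrightarrow> Y i \<in> borel_measurable M"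
  shows "(\<lambda>\<omega>. kth_smallest K (map (\<lambda>i. Y i \<omega>) [1..<N+1])) \<in> borel_measurable M"
  unfolding borel_measurable_iff_le
proof
  fix a
  define S where "S \<omega> = (\<Sum>i\<in>{1..N}. indicator {w \<in> space M. Y i w \<le> a} \<omega> :: real)" for \<omega>
  have Sm: "S \<in> borel_measurable M" unfolding S_def
    by (intro borel_measurable_sum borel_measurable_indicator borel_measurable_le Ym) auto
  have cardS: "real (card {i\<in>{1..N}. Y i \<omega> \<le> a}) = S \<omega>" if "\<omega> \<in> space M" for \<omega>
  proof -
    have "real (card {i\<in>{1..N}. Y i \<omega> \<le> a}) = (\<Sum>i\<in>{i\<in>{1..N}. Y i \<omega> \<le> a}. 1)" by simp
    also have "\<dots> = (\<Sum>i\<in>{1..N}. if Y i \<omega> \<le> a then 1 else 0)" by (rule sum.inter_filter) simp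
    also have "\<dots> = S \<omega>" unfolding S_def using that by (intro sum.cong) (auto simp: indicator_def)
    finally show ?thesis .
  qed
  have "{w \<in> space M. kth_smallest K (map (\<lambda>i. Y i w) [1..<N+1]) \<le> a} = {w \<in> space M. real K \<le> S w}"
    using kth_le_iff[OF assms(1,2)] cardS by (auto simp flip: cardS)
  also have "\<dots> \<in> sets M" using Sm by measurable
  finally show "{w \<in> space M. kth_smallest K (map (\<lambda>i. Y i w) [1..<N+1]) \<le> a} \<in> sets M" .
qed

lemma dist_eq:
  fixes Y1 Y2 :: "'a \<Rightarrow> real"
  assumes "prob_space M" "Y1 \<in> borel_measurable M" "Y2 \<in> borel_measurable M"
    "\<And>t. measure M {\<omega>\<in>space M. Y1 \<omega> \<le> t} = measure M {\<omega>\<in>space M. Y2 \<omega> \<le> t}"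
  shows "distr M borel Y1 = distr M borel Y2"
proof -
  interpret prob_space M by fact
  have c: "cdf (distr M borel Y) t = measure M {\<omega>\<in>space M. Y \<omega> \<le> t}" if "Y \<in> borel_measurable M" for Y t
    using that by (simp add: cdf_def measure_distr vimage_def Int_def conj_commute)
  have r1: "real_distribution (distr M borel Y1)" using assms(2) by (intro real_distribution_distr) auto
  have r2: "real_distribution (distr M borel Y2)" using assms(3) by (intro real_distribution_distr) auto
  have "cdf (distr M borel Y1) = cdf (distr M borel Y2)"
    using c assms(2,3,4) by auto
  from cdf_unique[OF r1 r2 this] show ?thesis .
qed

lemma atomless:
  fixes Y :: "'a \<Rightarrow> real"
  assumes "prob_space M" "Y \<in> borel_measurable M" "ls > 0"
    "\<And>t. measure M {\<omega>\<in>space M. Y \<omega> \<le> t} = (if c < t then 1 - exp (- ls * (t - c)) else 0)"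
  shows "emeasure (distr M borel Y) {t} = 0"
proof -
  interpret prob_space M by fact
  interpret D: real_distribution "distr M borel Y" using assms(2) by (intro real_distribution_distr) auto
  have c: "cdf (distr M borel Y) s = max 0 (1 - exp (- ls * (s - c)))" for s
  proof -
    have "cdf (distr M borel Y) s = measure M {\<omega>\<in>space M. Y \<omega> \<le> s}"
      using assms(2) by (simp add: cdf_def measure_distr vimage_def Int_def conj_commute)
    also have "\<dots> = max 0 (1 - exp (- ls * (s - c)))"
    proof (cases "c < s")
      case True
      then have "exp (- ls * (s - c)) < 1" using assms(3) by simp
      then show ?thesis using True assms(4)[of s] by simp
    next
      case False
      then have "0 \<le> - ls * (s - c)" using assms(3) by (simp add: mult_nonneg_nonpos)
      then have "1 \<le> exp (- ls * (s - c))" by simp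
      then show ?thesis using False assms(4)[of s] by simp
    qed
    finally show ?thesis .
  qed
  have "isCont (cdf (distr M borel Y)) t" unfolding c[abs_def] by (intro continuous_intros)
  then have "measure (distr M borel Y) {t} = 0" using D.isCont_cdf by simp
  then show ?thesis by (simp add: D.emeasure_eq_measure)
qed

lemma ratio_eq:
  fixes a b p q n k :: real
  assumes "a * n = k * p" "b * n = k * q" "b > 0" "n > 0"
  shows "a / b = p / q"
proof -
  have "k \<noteq> 0" "q \<noteq> 0" using assms by auto
  have e: "a * n * q = b * n * p"
  proof -
    have "a * n * q = k * p * q" using assms(1) by simp
    also have "\<dots> = k * q * p" by (simp only: mult.assoc mult.commute[of p q])
    also have "\<dots> = b * n * p" using assms(2) by simp
    finally show ?thesis .
  qed
  have "a * q = b * p"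
  proof -
    have "(a * q) * n = (b * p) * n" using e by (simp only: mult.assoc mult.commute[of n] mult.left_commute[of n])
    then show ?thesis using assms(4) by simp
  qed
  then show ?thesis using assms(3) \<open>q \<noteq> 0\<close> by (simp add: frac_eq_eq)
qed
theorem corollary1:
  fixes M :: "'a measure"
    and T :: "nat \<Rightarrow> 'a \<Rightarrow> real" and TD :: "'a \<Rightarrow> real"
    and N K n :: nat and ls ld c :: real
  assumes "prob_space M"
    and "N \<ge> 1" and "1 \<le> K" and "K \<le> N"
    and "ls > 0" and "ld > 0" and "c > 0"
    and "n \<in> {1..N}"
    and "\<And>i. i \<in> {1..N} \<Longrightarrow> T i \<in> borel_measurable M"
    and "TD \<in> borel_measurable M"
    and "prob_space.indep_vars M (\<lambda>_. borel) (case_option TD T) (insert None (Some ` {1..N}))"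
    and "\<And>i t. i \<in> {1..N} \<Longrightarrow>
           measure M {\<omega> \<in> space M. T i \<omega> \<le> t} = (if c < t then 1 - exp (- ls * (t - c)) else 0)"
    and "distributed M lborel TD (\<lambda>t. ennreal (if c < t then ld * exp (- ld * (t - c)) else 0))"
  defines "TK \<equiv> \<lambda>\<omega>. kth_smallest K (map (\<lambda>i. T i \<omega>) [1..<N+1])"
  defines "CS1 \<equiv> {\<omega> \<in> space M. TK \<omega> < TD \<omega> \<and> T n \<omega> \<le> min (TD \<omega>) (TK \<omega>)}"
  defines "CF1 \<equiv> {\<omega> \<in> space M. TK \<omega> < TD \<omega> \<and> T n \<omega> > min (TD \<omega>) (TK \<omega>)}"
  assumes "measure M CS1 > 0" and "measure M CF1 > 0"
  shows "cond_exp_event M TK CS1 = cond_exp_event M TK CF1 \<and>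
         cond_exp_event M (\<lambda>\<omega>. (TK \<omega>)\<^sup>2) CS1 = cond_exp_event M (\<lambda>\<omega>. (TK \<omega>)\<^sup>2) CF1"
proof -
  interpret P: prob_space M by (rule assms(1))
  have K1: "1 \<le> K" and KN: "K \<le> N" and lsp: "0 < ls" and nN: "n \<in> {1..N}"
    using assms(3,4,5,8) by auto
  have Npos: "N > 0" using assms(2) by simp
  have Tm: "\<And>i. i \<in> {1..N} \<Longrightarrow> T i \<in> borel_measurable M" by (rule assms(9))
  have TDm: "TD \<in> borel_measurable M" by (rule assms(10))
  have ind: "P.indep_vars (\<lambda>_. borel) (case_option TD T) (insert None (Some ` {1..N}))"
    using assms(11) by simp
  have cdfT: "\<And>t. measure M {\<omega>\<in>space M. T i \<omega> \<le> t} = (if c < t then 1 - exp (- ls * (t - c)) else 0)"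
    if "i \<in> {1..N}" for i using assms(12) that by blast
  have TK_def: "TK = (\<lambda>\<omega>. kth_smallest K (map (\<lambda>i. T i \<omega>) [1..<N+1]))" using assms(14) by simp
  have CS1_def: "CS1 = {\<omega> \<in> space M. TK \<omega> < TD \<omega> \<and> T n \<omega> \<le> min (TD \<omega>) (TK \<omega>)}"
    using assms(15) by simp
  have CF1_def: "CF1 = {\<omega> \<in> space M. TK \<omega> < TD \<omega> \<and> T n \<omega> > min (TD \<omega>) (TK \<omega>)}"
    using assms(16) by simp
  have mCS: "measure M CS1 > 0" using assms(17) .
  have mCF: "measure M CF1 > 0" using assms(18) .
  have TKm: "TK \<in> borel_measurable M" unfolding TK_def by (rule kth_meas[OF K1 KN Tm])

  define I where "I = insert None (Some ` {1..N})"
  define X where "X = case_option TD T"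
  define \<mu> where "\<mu> j = (if j \<in> I then distr M borel (X j) else return borel 0)" for j
  define Q where "Q = PiM I \<mu>"
  define Xv where "Xv \<omega> = (\<lambda>j\<in>I. X j \<omega>)" for \<omega>
  have finI: "finite I" unfolding I_def by simp
  have XI: "X j \<in> borel_measurable M" if "j \<in> I" for j
    using that Tm TDm by (auto simp: I_def X_def)
  have prob_mu: "prob_space (\<mu> j)" for j
    by (auto simp: \<mu>_def intro!: P.prob_space_distr prob_space_return XI)
  have sets_mu: "sets (\<mu> j) = sets borel" for j by (simp add: \<mu>_def)
  interpret PP: product_prob_space \<mu> by (rule product_prob_spaceI[OF prob_mu])
  interpret QP: prob_space Q unfolding Q_def by (rule prob_space_PiM[OF prob_mu])
  have sets_Q: "sets Q = sets (PiM I (\<lambda>_. borel))" unfolding Q_def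
    by (rule sets_PiM_cong) (auto simp: sets_mu)
  have meas_Q: "measurable Q N' = measurable (PiM I (\<lambda>_. borel)) N'" for N' :: "'z measure"
    by (rule measurable_cong_sets[OF sets_Q refl])
  have Xvm: "Xv \<in> measurable M (PiM I (\<lambda>_. borel))" unfolding Xv_def
    by (rule measurable_restrict) (rule XI)
  have distrX: "distr M (PiM I (\<lambda>_. borel)) Xv = Q"
  proof -
    have "distr M (PiM I (\<lambda>_. borel)) Xv = PiM I (\<lambda>j. distr M borel (X j))"
      unfolding Xv_def using P.indep_vars_iff_distr_eq_PiM'[where I=I and M'="\<lambda>_. borel" and X=X] ind XI
      by (simp add: I_def X_def)
    also have "\<dots> = Q" unfolding Q_def by (rule PiM_cong) (auto simp: \<mu>_def)
    finally show ?thesis .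
  qed
  have muS: "\<mu> (Some k) = \<mu> (Some n)" if "k \<in> {1..N}" for k
  proof -
    have "distr M borel (T k) = distr M borel (T n)"
      by (rule dist_eq[OF assms(1) Tm[OF that] Tm[OF nN]]) (simp add: cdfT[OF that] cdfT[OF nN])
    then show ?thesis using that nN by (simp add: \<mu>_def I_def X_def)
  qed
  have atom: "emeasure (\<mu> (Some k)) {t} = 0" if "k \<in> {1..N}" for k t
    using atomless[OF assms(1) Tm[OF that] lsp cdfT[OF that]] that by (simp add: \<mu>_def I_def X_def)
  have ci: "(\<lambda>x. x j) \<in> borel_measurable Q" if "j \<in> I" for j
    unfolding meas_Q using measurable_component_singleton[OF that, of "\<lambda>_. borel"] by simp
  have ciS: "(\<lambda>x. x (Some k)) \<in> borel_measurable Q" if "k \<in> {1..N}" for k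
    using ci that by (auto simp: I_def)
  have cN: "(\<lambda>x. x None) \<in> borel_measurable Q" using ci by (auto simp: I_def)
  have space_mu: "space (\<mu> j) = UNIV" for j using sets_eq_imp_space_eq[OF sets_mu[of j]] by simp

  have ties: "{x \<in> space Q. x (Some i) = x (Some j)} \<in> null_sets Q"
    if ij: "i \<in> {1..N}" "j \<in> {1..N}" "i \<noteq> j" for i j
  proof -
    define D where "D = {x \<in> space Q. x (Some i) = x (Some j)}"
    define I' where "I' = I - {Some i}"
    have II': "I = insert (Some i) I'" and nI': "Some i \<notin> I'" and fI': "finite I'"
      using ij finI by (auto simp: I'_def I_def)
    have Dm: "D \<in> sets Q" unfolding D_def using ciS[OF ij(1)] ciS[OF ij(2)] by measurable
    have "emeasure Q D = (\<integral>\<^sup>+x. indicator D x \<partial>Q)" using Dm by simp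
    also have "\<dots> = (\<integral>\<^sup>+x. (\<integral>\<^sup>+y. indicator D (x(Some i := y)) \<partial>\<mu> (Some i)) \<partial>PiM I' \<mu>)"
      unfolding Q_def II' using Dm
      by (intro PP.product_nn_integral_insert[OF fI' nI']) (simp add: Q_def II')
    also have "\<dots> = (\<integral>\<^sup>+x. 0 \<partial>PiM I' \<mu>)"
    proof (rule nn_integral_cong)
      fix x assume x: "x \<in> space (PiM I' \<mu>)"
      have ind_eq: "indicator D (x(Some i := y)) = indicator {x (Some j)} y" for y :: real
      proof -
        have "x(Some i := y) \<in> space Q" unfolding Q_def II' space_PiM
          using x by (intro PiE_fun_upd) (auto simp: space_PiM space_mu)
        then show ?thesis using ij by (auto simp: D_def indicator_def)
      qed
      then have "(\<integral>\<^sup>+y. indicator D (x(Some i := y)) \<partial>\<mu> (Some i)) = (\<integral>\<^sup>+y. indicator {x (Some j)} y \<partial>\<mu> (Some i))"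
        by (intro nn_integral_cong ind_eq)
      also have "\<dots> = emeasure (\<mu> (Some i)) {x (Some j)}"
        by (rule nn_integral_indicator) (simp add: sets_mu)
      also have "\<dots> = 0" by (rule atom[OF ij(1)])
      finally show "(\<integral>\<^sup>+y. indicator D (x(Some i := y)) \<partial>\<mu> (Some i)) = 0" .
    qed
    finally show ?thesis using Dm by (simp add: D_def null_sets_def)
  qed
  have AEinj: "AE x in Q. inj_on (\<lambda>k. x (Some k)) {1..N}"
  proof -
    have fin: "finite {(i, j). i \<in> {1..N} \<and> j \<in> {1..N} \<and> i \<noteq> j}"
      by (rule finite_subset[of _ "{1..N} \<times> {1..N}"]) auto
    have "AE x in Q. \<forall>p\<in>{(i, j). i \<in> {1..N} \<and> j \<in> {1..N} \<and> i \<noteq> j}. x (Some (fst p)) \<noteq> x (Some (snd p))"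
    proof (rule AE_finite_allI[OF fin])
      fix p assume "p \<in> {(i, j). i \<in> {1..N} \<and> j \<in> {1..N} \<and> i \<noteq> j}"
      then obtain i j where p: "p = (i, j)" "i \<in> {1..N}" "j \<in> {1..N}" "i \<noteq> j" by auto
      show "AE x in Q. x (Some (fst p)) \<noteq> x (Some (snd p))"
        by (rule AE_I'[OF ties[OF p(2-4)]]) (auto simp: p)
    qed
    then show ?thesis
    proof eventually_elim
      case (elim x)
      show ?case unfolding inj_on_def
      proof (intro ballI impI)
        fix a b assume ab: "a \<in> {1..N}" "b \<in> {1..N}" "x (Some a) = x (Some b)"
        show "a = b"
        proof (rule ccontr)
          assume "a \<noteq> b"
          then have "(a, b) \<in> {(i, j). i \<in> {1..N} \<and> j \<in> {1..N} \<and> i \<noteq> j}" using ab by auto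
          from elim[rule_format, OF this] show False using ab by simp
        qed
      qed
    qed
  qed

  define TKf where "TKf x = kth_smallest K (map (\<lambda>k. x (Some k)) [1..<N+1])" for x :: "nat option \<Rightarrow> real"
  have TKfm: "TKf \<in> borel_measurable Q" unfolding TKf_def by (rule kth_meas[OF K1 KN ciS])
  have XvNone: "Xv \<omega> None = TD \<omega>" for \<omega> by (simp add: Xv_def I_def X_def)
  have XvSome: "Xv \<omega> (Some k) = T k \<omega>" if "k \<in> {1..N}" for \<omega> k using that by (simp add: Xv_def I_def X_def)
  have TK_Xv: "TKf (Xv \<omega>) = TK \<omega>" for \<omega>
  proof -
    have "map (\<lambda>k. Xv \<omega> (Some k)) [1..<N+1] = map (\<lambda>k. T k \<omega>) [1..<N+1]"
      by (rule map_cong[OF refl], rule XvSome) (auto simp del: upt_Suc)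
    then show ?thesis unfolding TKf_def TK_def by (simp only:)
  qed

  have core: "(\<integral>\<^sup>+\<omega>. u (TK \<omega>) (TD \<omega>) * indicator Rs (T n \<omega>, TK \<omega>) \<partial>M) * of_nat N
      = of_nat m * (\<integral>\<^sup>+\<omega>. u (TK \<omega>) (TD \<omega>) \<partial>M)"
    if um: "(\<lambda>p. u (fst p) (snd p)) \<in> borel_measurable (borel \<Otimes>\<^sub>M borel)"
      and Rsm: "Rs \<in> sets (borel \<Otimes>\<^sub>M borel)"
      and cnt: "\<And>y. inj_on y {1..N} \<Longrightarrow> card {i\<in>{1..N}. (y i, kth_smallest K (map y [1..<N+1])) \<in> Rs} = m"
    for u :: "real \<Rightarrow> real \<Rightarrow> ennreal" and Rs :: "(real \<times> real) set" and m :: nat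
  proof -
    define U where "U x = u (TKf x) (x None)" for x
    define \<Psi> where "\<Psi> i x = U x * indicator Rs (x (Some i), TKf x)" for i x
    have Um: "U \<in> borel_measurable Q"
      using measurable_compose[OF measurable_Pair[OF TKfm cN] um] unfolding U_def[abs_def] by simp
    have \<Psi>m: "\<Psi> i \<in> borel_measurable Q" if "i \<in> {1..N}" for i
    proof -
      have "(\<lambda>x. indicator Rs (x (Some i), TKf x) :: ennreal) \<in> borel_measurable Q"
        using measurable_compose[OF measurable_Pair[OF ciS[OF that] TKfm] borel_measurable_indicator[OF Rsm]]
        by simp
      then show ?thesis unfolding \<Psi>_def[abs_def] using Um by (intro borel_measurable_times_ennreal)
    qed
    have inv: "integral\<^sup>N Q (\<Psi> n) = integral\<^sup>N Q (\<Psi> i)" if iN: "i \<in> {1..N}" for i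
    proof -
      define \<tau> where "\<tau> k = (if k = n then i else if k = i then n else k)" for k
      define \<sigma> where "\<sigma> j = map_option \<tau> j" for j
      have \<tau>\<tau>: "\<tau> (\<tau> k) = k" for k by (simp add: \<tau>_def)
      have \<tau>N: "\<tau> k \<in> {1..N}" if "k \<in> {1..N}" for k using that iN nN by (simp add: \<tau>_def)
      have \<sigma>\<sigma>: "\<sigma> (\<sigma> j) = j" for j by (cases j) (simp_all add: \<sigma>_def \<tau>\<tau>)
      have \<sigma>I: "\<sigma> j \<in> I" if "j \<in> I" for j using that \<tau>N by (auto simp: \<sigma>_def I_def)
      have \<sigma>inj: "inj_on \<sigma> I" by (metis \<sigma>\<sigma> inj_on_inverseI)
      have \<mu>\<sigma>: "\<mu> (\<sigma> j) = \<mu> j" if "j \<in> I" for j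
        using that muS \<tau>N by (auto simp: \<sigma>_def I_def)
      define \<rho> where "\<rho> x = (\<lambda>j\<in>I. x (\<sigma> j))" for x :: "nat option \<Rightarrow> real"
      have \<rho>m: "\<rho> \<in> measurable Q Q"
        unfolding \<rho>_def Q_def
      proof (rule measurable_restrict)
        fix j assume "j \<in> I"
        then show "(\<lambda>x. x (\<sigma> j)) \<in> measurable (PiM I \<mu>) (\<mu> j)"
          using measurable_component_singleton[OF \<sigma>I[OF \<open>j \<in> I\<close>], of \<mu>] \<mu>\<sigma> by simp
      qed
      have dQ: "distr Q Q \<rho> = Q"
      proof -
        have "distr Q (PiM I (\<lambda>j. \<mu> (\<sigma> j))) \<rho> = PiM I (\<lambda>j. \<mu> (\<sigma> j))" unfolding \<rho>_def Q_def
          by (rule distr_PiM_reindex) (auto simp: prob_mu \<sigma>inj \<sigma>I)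
        moreover have "PiM I (\<lambda>j. \<mu> (\<sigma> j)) = Q" unfolding Q_def by (rule PiM_cong) (auto simp: \<mu>\<sigma>)
        ultimately show ?thesis by simp
      qed
      have pt: "\<Psi> n (\<rho> x) = \<Psi> i x" for x
      proof -
        have r1: "\<rho> x None = x None" by (simp add: \<rho>_def \<sigma>_def I_def)
        have r2: "\<rho> x (Some k) = x (Some (\<tau> k))" if "k \<in> {1..N}" for k
          using that by (simp add: \<rho>_def \<sigma>_def I_def)
        have "map (\<lambda>k. \<rho> x (Some k)) [1..<N+1] = map ((\<lambda>k. x (Some k)) \<circ> \<tau>) [1..<N+1]"
          by (rule map_cong[OF refl], simp only: o_apply, rule r2) (auto simp del: upt_Suc)
        moreover have "mset (map ((\<lambda>k. x (Some k)) \<circ> \<tau>) [1..<N+1]) = mset (map (\<lambda>k. x (Some k)) [1..<N+1])"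
        proof -
          have injt: "inj_on \<tau> {1..<N+1}" by (metis \<tau>\<tau> inj_on_inverseI)
          have \<tau>N': "\<tau> k \<in> {1..<N+1}" if "k \<in> {1..<N+1}" for k
            using \<tau>N[of k] that by auto
          have imt: "\<tau> ` {1..<N+1} = {1..<N+1}"
          proof
            show "\<tau> ` {1..<N+1} \<subseteq> {1..<N+1}" using \<tau>N' by blast
            show "{1..<N+1} \<subseteq> \<tau> ` {1..<N+1}"
            proof
              fix k assume "k \<in> {1..<N+1}"
              then have "\<tau> k \<in> {1..<N+1}" by (rule \<tau>N')
              then show "k \<in> \<tau> ` {1..<N+1}" using \<tau>\<tau>[of k] by (metis image_eqI)
            qed
          qed
          have "mset (map ((\<lambda>k. x (Some k)) \<circ> \<tau>) [1..<N+1]) = image_mset (\<lambda>k. x (Some k)) (image_mset \<tau> (mset_set {1..<N+1}))"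
            by (simp del: upt_Suc add: image_mset.compositionality)
          also have "image_mset \<tau> (mset_set {1..<N+1}) = mset_set {1..<N+1}"
            using image_mset_mset_set[OF injt] imt by simp
          finally show ?thesis by (simp del: upt_Suc add: comp_def)
        qed
        ultimately have "TKf (\<rho> x) = TKf x" unfolding TKf_def by (metis kth_perm)
        moreover have "\<rho> x (Some n) = x (Some i)" using r2[OF nN] by (simp add: \<tau>_def)
        ultimately show ?thesis by (simp add: \<Psi>_def U_def r1)
      qed
      have "integral\<^sup>N Q (\<Psi> n) = integral\<^sup>N (distr Q Q \<rho>) (\<Psi> n)" by (simp add: dQ)
      also have "\<dots> = (\<integral>\<^sup>+x. \<Psi> n (\<rho> x) \<partial>Q)"
        by (rule nn_integral_distr[OF \<rho>m]) (simp add: dQ \<Psi>m[OF nN])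
      also have "\<dots> = integral\<^sup>N Q (\<Psi> i)" by (simp add: pt)
      finally show ?thesis .
    qed
    have sum\<Psi>: "AE x in Q. (\<Sum>i\<in>{1..N}. \<Psi> i x) = of_nat m * U x"
      using AEinj
    proof eventually_elim
      case (elim x)
      have "(\<Sum>i\<in>{1..N}. \<Psi> i x) = U x * (\<Sum>i\<in>{1..N}. indicator Rs (x (Some i), TKf x))"
        by (simp add: \<Psi>_def sum_distrib_left)
      also have "(\<Sum>i\<in>{1..N}. indicator Rs (x (Some i), TKf x) :: ennreal)
          = (\<Sum>i\<in>{1..N}. if (x (Some i), TKf x) \<in> Rs then 1 else 0)"
        by (rule sum.cong) (simp_all add: indicator_def)
      also have "\<dots> = (\<Sum>i\<in>{i\<in>{1..N}. (x (Some i), TKf x) \<in> Rs}. 1)"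
        by (rule sum.inter_filter[symmetric]) simp
      also have "\<dots> = of_nat (card {i\<in>{1..N}. (x (Some i), TKf x) \<in> Rs})" by simp
      also have "card {i\<in>{1..N}. (x (Some i), TKf x) \<in> Rs} = m"
        using cnt[OF elim] by (simp add: TKf_def)
      finally show ?case by (simp add: mult.commute)
    qed
    have "integral\<^sup>N Q (\<Psi> n) * of_nat N = (\<Sum>i\<in>{1..N}. integral\<^sup>N Q (\<Psi> i))"
    proof -
      have "(\<Sum>i\<in>{1..N}. integral\<^sup>N Q (\<Psi> i)) = (\<Sum>i\<in>{1..N}. integral\<^sup>N Q (\<Psi> n))"
        by (rule sum.cong) (simp_all add: inv)
      then show ?thesis by (simp add: mult.commute)
    qed
    also have "\<dots> = (\<integral>\<^sup>+x. (\<Sum>i\<in>{1..N}. \<Psi> i x) \<partial>Q)"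
      by (rule nn_integral_sum[symmetric]) (rule \<Psi>m)
    also have "\<dots> = (\<integral>\<^sup>+x. of_nat m * U x \<partial>Q)" by (rule nn_integral_cong_AE[OF sum\<Psi>])
    also have "\<dots> = of_nat m * integral\<^sup>N Q U" by (rule nn_integral_cmult[OF Um])
    finally have coreQ: "integral\<^sup>N Q (\<Psi> n) * of_nat N = of_nat m * integral\<^sup>N Q U" .
    have e1: "integral\<^sup>N Q (\<Psi> n) = (\<integral>\<^sup>+\<omega>. u (TK \<omega>) (TD \<omega>) * indicator Rs (T n \<omega>, TK \<omega>) \<partial>M)"
    proof -
      have "integral\<^sup>N Q (\<Psi> n) = integral\<^sup>N (distr M (PiM I (\<lambda>_. borel)) Xv) (\<Psi> n)" by (simp add: distrX)
      also have "\<dots> = (\<integral>\<^sup>+\<omega>. \<Psi> n (Xv \<omega>) \<partial>M)"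
        by (rule nn_integral_distr[OF Xvm]) (simp add: distrX \<Psi>m[OF nN])
      also have "\<dots> = (\<integral>\<^sup>+\<omega>. u (TK \<omega>) (TD \<omega>) * indicator Rs (T n \<omega>, TK \<omega>) \<partial>M)"
        by (simp add: \<Psi>_def U_def TK_Xv XvNone XvSome[OF nN])
      finally show ?thesis .
    qed
    have e2: "integral\<^sup>N Q U = (\<integral>\<^sup>+\<omega>. u (TK \<omega>) (TD \<omega>) \<partial>M)"
    proof -
      have "integral\<^sup>N Q U = integral\<^sup>N (distr M (PiM I (\<lambda>_. borel)) Xv) U" by (simp add: distrX)
      also have "\<dots> = (\<integral>\<^sup>+\<omega>. U (Xv \<omega>) \<partial>M)"
        by (rule nn_integral_distr[OF Xvm]) (simp add: distrX Um)
      also have "\<dots> = (\<integral>\<^sup>+\<omega>. u (TK \<omega>) (TD \<omega>) \<partial>M)"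
        by (simp add: U_def TK_Xv XvNone)
      finally show ?thesis .
    qed
    show ?thesis using coreQ e1 e2 by simp
  qed
  define \<Phi> where "\<Phi> f = (\<integral>\<omega>. (if TK \<omega> < TD \<omega> then f (TK \<omega>) else 0) \<partial>M)" for f :: "real \<Rightarrow> real"
  have CS1m: "CS1 \<in> sets M" unfolding CS1_def using TKm TDm Tm[OF nN] by measurable
  have CF1m: "CF1 \<in> sets M" unfolding CF1_def using TKm TDm Tm[OF nN] by measurable
  have gen: "(\<integral>\<omega>. indicator C \<omega> * f (TK \<omega>) \<partial>M) * real N = real m * \<Phi> f"
    if fm: "f \<in> borel_measurable borel" and Cm: "C \<in> sets M"
      and Rsm: "Rs \<in> sets (borel \<Otimes>\<^sub>M borel)"
      and cnt: "\<And>y. inj_on y {1..N} \<Longrightarrow> card {i\<in>{1..N}. (y i, kth_smallest K (map y [1..<N+1])) \<in> Rs} = m"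
      and Ceq: "\<And>\<omega>. \<omega> \<in> space M \<Longrightarrow> \<omega> \<in> C \<longleftrightarrow> TK \<omega> < TD \<omega> \<and> (T n \<omega>, TK \<omega>) \<in> Rs"
    for f C Rs m
  proof -
    define G where "G \<omega> = (if TK \<omega> < TD \<omega> then f (TK \<omega>) else 0)" for \<omega>
    define F where "F \<omega> = indicator C \<omega> * f (TK \<omega>)" for \<omega>
    have Gm: "G \<in> borel_measurable M" unfolding G_def using fm TKm TDm by measurable
    have Fm: "F \<in> borel_measurable M" unfolding F_def using fm TKm Cm by measurable
    have FG: "F \<omega> = G \<omega> * indicator Rs (T n \<omega>, TK \<omega>)" if "\<omega> \<in> space M" for \<omega>
      using Ceq[OF that] by (auto simp: F_def G_def indicator_def)
    have u1: "(\<lambda>p. ennreal (if fst p < snd p then f (fst p) else 0)) \<in> borel_measurable (borel \<Otimes>\<^sub>M borel)"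
      using fm by measurable
    have u2: "(\<lambda>p. ennreal (- (if fst p < snd p then f (fst p) else 0))) \<in> borel_measurable (borel \<Otimes>\<^sub>M borel)"
      using fm by measurable
    have p: "(\<integral>\<^sup>+x. ennreal (F x) \<partial>M) * of_nat N = of_nat m * (\<integral>\<^sup>+x. ennreal (G x) \<partial>M)"
    proof -
      have "(\<integral>\<^sup>+x. ennreal (F x) \<partial>M) = (\<integral>\<^sup>+\<omega>. ennreal (if TK \<omega> < TD \<omega> then f (TK \<omega>) else 0) * indicator Rs (T n \<omega>, TK \<omega>) \<partial>M)"
        by (rule nn_integral_cong) (simp add: FG G_def indicator_def)
      then show ?thesis using core[OF u1 Rsm cnt] by (simp add: G_def)
    qed
    have q: "(\<integral>\<^sup>+x. ennreal (- F x) \<partial>M) * of_nat N = of_nat m * (\<integral>\<^sup>+x. ennreal (- G x) \<partial>M)"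
    proof -
      have "(\<integral>\<^sup>+x. ennreal (- F x) \<partial>M) = (\<integral>\<^sup>+\<omega>. ennreal (- (if TK \<omega> < TD \<omega> then f (TK \<omega>) else 0)) * indicator Rs (T n \<omega>, TK \<omega>) \<partial>M)"
        by (rule nn_integral_cong) (simp add: FG G_def indicator_def)
      then show ?thesis using core[OF u2 Rsm cnt] by (simp add: G_def)
    qed
    show ?thesis using RL[OF Fm Gm Npos p q] by (simp add: F_def G_def \<Phi>_def)
  qed
  have RsLe: "{p :: real \<times> real. fst p \<le> snd p} \<in> sets (borel \<Otimes>\<^sub>M borel)"
    unfolding borel_prod by (rule borel_closed) (intro closed_Collect_le continuous_intros)
  have RsGt: "{p :: real \<times> real. snd p < fst p} \<in> sets (borel \<Otimes>\<^sub>M borel)"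
    unfolding borel_prod by (rule borel_open) (intro open_Collect_less continuous_intros)
  have cntLe: "card {i\<in>{1..N}. (y i, kth_smallest K (map y [1..<N+1])) \<in> {p. fst p \<le> snd p}} = K"
    if "inj_on y {1..N}" for y using kth_count[OF K1 KN that] by simp
  have cntGt: "card {i\<in>{1..N}. (y i, kth_smallest K (map y [1..<N+1])) \<in> {p. snd p < fst p}} = N - K"
    if "inj_on y {1..N}" for y using kth_count_gt[OF K1 KN that] by simp
  have CSeq: "\<omega> \<in> CS1 \<longleftrightarrow> TK \<omega> < TD \<omega> \<and> (T n \<omega>, TK \<omega>) \<in> {p. fst p \<le> snd p}"
    if "\<omega> \<in> space M" for \<omega> using that by (auto simp: CS1_def)
  have CFeq: "\<omega> \<in> CF1 \<longleftrightarrow> TK \<omega> < TD \<omega> \<and> (T n \<omega>, TK \<omega>) \<in> {p. snd p < fst p}"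
    if "\<omega> \<in> space M" for \<omega> using that by (auto simp: CF1_def)
  have S: "(\<integral>\<omega>. indicator CS1 \<omega> * f (TK \<omega>) \<partial>M) * real N = real K * \<Phi> f"
    if "f \<in> borel_measurable borel" for f
    by (rule gen[OF that CS1m RsLe cntLe CSeq])
  have F: "(\<integral>\<omega>. indicator CF1 \<omega> * f (TK \<omega>) \<partial>M) * real N = real (N - K) * \<Phi> f"
    if "f \<in> borel_measurable borel" for f
    by (rule gen[OF that CF1m RsGt cntGt CFeq])
  have mS: "measure M CS1 = (\<integral>\<omega>. indicator CS1 \<omega> * (\<lambda>_. 1::real) (TK \<omega>) \<partial>M)"
    using CS1m by (simp add: Int_absorb2 sets.sets_into_space)
  have mF: "measure M CF1 = (\<integral>\<omega>. indicator CF1 \<omega> * (\<lambda>_. 1::real) (TK \<omega>) \<partial>M)"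
    using CF1m by (simp add: Int_absorb2 sets.sets_into_space)
  have S0: "measure M CS1 * real N = real K * \<Phi> (\<lambda>_. 1)" using S[of "\<lambda>_. 1"] mS by simp
  have F0: "measure M CF1 * real N = real (N - K) * \<Phi> (\<lambda>_. 1)" using F[of "\<lambda>_. 1"] mF by simp
  have S1: "(\<integral>\<omega>. indicator CS1 \<omega> * TK \<omega> \<partial>M) * real N = real K * \<Phi> (\<lambda>t. t)" using S[of "\<lambda>t. t"] by simp
  have F1: "(\<integral>\<omega>. indicator CF1 \<omega> * TK \<omega> \<partial>M) * real N = real (N - K) * \<Phi> (\<lambda>t. t)" using F[of "\<lambda>t. t"] by simp
  have S2: "(\<integral>\<omega>. indicator CS1 \<omega> * (TK \<omega>)\<^sup>2 \<partial>M) * real N = real K * \<Phi> (\<lambda>t. t\<^sup>2)" using S[of "\<lambda>t. t\<^sup>2"] by simp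
  have F2: "(\<integral>\<omega>. indicator CF1 \<omega> * (TK \<omega>)\<^sup>2 \<partial>M) * real N = real (N - K) * \<Phi> (\<lambda>t. t\<^sup>2)" using F[of "\<lambda>t. t\<^sup>2"] by simp
  have NR: "real N > 0" using Npos by simp
  have "cond_exp_event M TK CS1 = \<Phi> (\<lambda>t. t) / \<Phi> (\<lambda>_. 1)"
    unfolding cond_exp_event_def by (rule ratio_eq[OF S1 S0 mCS NR])
  moreover have "cond_exp_event M TK CF1 = \<Phi> (\<lambda>t. t) / \<Phi> (\<lambda>_. 1)"
    unfolding cond_exp_event_def by (rule ratio_eq[OF F1 F0 mCF NR])
  moreover have "cond_exp_event M (\<lambda>\<omega>. (TK \<omega>)\<^sup>2) CS1 = \<Phi> (\<lambda>t. t\<^sup>2) / \<Phi> (\<lambda>_. 1)"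
    unfolding cond_exp_event_def by (rule ratio_eq[OF S2 S0 mCS NR])
  moreover have "cond_exp_event M (\<lambda>\<omega>. (TK \<omega>)\<^sup>2) CF1 = \<Phi> (\<lambda>t. t\<^sup>2) / \<Phi> (\<lambda>_. 1)"
    unfolding cond_exp_event_def by (rule ratio_eq[OF F2 F0 mCF NR])
  ultimately show ?thesis by simp
qed

end
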